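(* Let $a\ne0$ and let $A,B\in\mathbb R$ not both zero. Define $h:\mathbb R\to\mathbb R$, $h(x):=A\cosh(ax)\cos(ax)-B\sinh(ax)\sin(ax)$. Then the local extrema of $h$ are isolated and their absolute values are strictly increasing on the nonnegative real axis: $|h(x_1)|<|h(x_2)|$ whenever $0\le x_1<x_2$ are local extremum points of $h$. *)

theory Defs
  imports Complex_Main
begin

definition local_max_point :: "(real \<Rightarrow> real) \<Rightarrow> real \<Rightarrow> bool" where
  "local_max_point f x \<longleftrightarrow> (\<exists>e>0. \<forall>y. \<bar>y - x\<bar> < e \<longrightarrow> f y \<le> f x)"

definition local_min_point :: "(real \<Rightarrow> real) \<Rightarrow> real \<Rightarrow> bool" where
  "local_min_point f x \<longleftrightarrow> (\<exists>e>0. \<forall>y. \<bar>y - x\<bar> < e \<longrightarrow> f x \<le> f y)"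

definition local_extremum_point :: "(real \<Rightarrow> real) \<Rightarrow> real \<Rightarrow> bool" where
  "local_extremum_point f x \<longleftrightarrow> local_max_point f x \<or> local_min_point f x"

end

theory Submission
  imports Defs
begin

lemma alg1:
  fixes A B s c S C :: real
  assumes "s^2 + c^2 = 1" "C^2 = S^2 + 1" "(A-B)*S*c - (A+B)*C*s = 0"
  shows "4*(s^2+S^2)*(A*C*c - B*S*s)^2 = 2*(A^2+B^2)*(s*c+S*C)^2"
  using assms by algebra

lemma alg2:
  fixes A B s c S C :: real
  assumes "s^2 + c^2 = 1" "C^2 = S^2 + 1" "(A-B)*S*c - (A+B)*C*s = 0"
  shows "(s^2+S^2)*(2*B*C*c + 2*A*S*s)^2 = 2*(A^2+B^2)*(s*c-S*C)^2"
  using assms by algebra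


lemma L1: "y \<noteq> 0 \<Longrightarrow> cosh y - cos y > (0::real)"
proof -
  assume "y \<noteq> 0"
  then have "cosh y > 1" using cosh_real_ge_1[of y] cosh_real_one_iff[of y] by linarith
  then show ?thesis using cos_le_one[of y] by linarith
qed

lemma L2: "y > 0 \<Longrightarrow> sinh y - sin y > (0::real)"
proof -
  assume y: "y > 0"
  have "(\<lambda>z. sinh z - sin z) 0 < (\<lambda>z. sinh z - sin z) y"
  proof (rule DERIV_pos_imp_increasing_open[OF y])
    fix x :: real assume "0 < x" "x < y"
    have "((\<lambda>z. sinh z - sin z) has_real_derivative (cosh x - cos x)) (at x)"
      by (auto intro!: derivative_eq_intros)
    moreover have "cosh x - cos x > 0" using L1 \<open>0 < x\<close> by simp
    ultimately show "\<exists>d. ((\<lambda>z. sinh z - sin z) has_real_derivative d) (at x) \<and> d > 0" by blast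
  next
    show "continuous_on {0..y} (\<lambda>z. sinh z - sin z)" by (intro continuous_intros)
  qed
  then show ?thesis by simp
qed

lemma L3: "y > 0 \<Longrightarrow> cos y + cosh y > (2::real)"
proof -
  assume y: "y > 0"
  have "(\<lambda>z. cos z + cosh z) 0 < (\<lambda>z. cos z + cosh z) y"
  proof (rule DERIV_pos_imp_increasing_open[OF y])
    fix x :: real assume "0 < x" "x < y"
    have "((\<lambda>z. cos z + cosh z) has_real_derivative (sinh x - sin x)) (at x)"
      by (auto intro!: derivative_eq_intros)
    moreover have "sinh x - sin x > 0" using L2 \<open>0 < x\<close> by simp
    ultimately show "\<exists>d. ((\<lambda>z. cos z + cosh z) has_real_derivative d) (at x) \<and> d > 0" by blast
  next
    show "continuous_on {0..y} (\<lambda>z. cos z + cosh z)" by (intro continuous_intros)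
  qed
  then show ?thesis by simp
qed

lemma L4: "y > 0 \<Longrightarrow> sin y + sinh y > (0::real)"
proof -
  assume y: "y > 0"
  have "(\<lambda>z. sin z + sinh z) 0 < (\<lambda>z. sin z + sinh z) y"
  proof (rule DERIV_pos_imp_increasing_open[OF y])
    fix x :: real assume "0 < x" "x < y"
    have "((\<lambda>z. sin z + sinh z) has_real_derivative (cos x + cosh x)) (at x)"
      by (auto intro!: derivative_eq_intros)
    moreover have "cos x + cosh x > 0" using L3 \<open>0 < x\<close> by fastforce
    ultimately show "\<exists>d. ((\<lambda>z. sin z + sinh z) has_real_derivative d) (at x) \<and> d > 0" by blast
  next
    show "continuous_on {0..y} (\<lambda>z. sin z + sinh z)" by (intro continuous_intros)
  qed
  then show ?thesis by simp
qed

lemma L5: "y > 0 \<Longrightarrow> (sin y + sinh y)^2 > 4 * (cosh y - cos (y::real))"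
proof -
  assume y: "y > 0"
  let ?F = "\<lambda>z::real. (sin z + sinh z)^2 - 4 * (cosh z - cos z)"
  have "?F 0 < ?F y"
  proof (rule DERIV_pos_imp_increasing_open[OF y])
    fix x :: real assume "0 < x" "x < y"
    have "(?F has_real_derivative (2 * (sin x + sinh x) * (cos x + cosh x - 2))) (at x)"
      by (auto intro!: derivative_eq_intros simp: algebra_simps)
    moreover have "2 * (sin x + sinh x) * (cos x + cosh x - 2) > 0"
      using L3[OF \<open>0 < x\<close>] L4[OF \<open>0 < x\<close>] by (intro mult_pos_pos) auto
    ultimately show "\<exists>d. (?F has_real_derivative d) (at x) \<and> d > 0" by blast
  next
    show "continuous_on {0..y} ?F" by (intro continuous_intros)
  qed
  then show ?thesis by simp
qed

definition W :: "real \<Rightarrow> real" where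
  "W y = (sin y + sinh y)^2 / (cosh y - cos y)"

lemma W_even: "W (-y) = W y"
  unfolding W_def by (simp add: power2_eq_square algebra_simps)

lemma W_gt4: "y > 0 \<Longrightarrow> W y > 4"
  unfolding W_def using L1[of y] L5[of y] by (simp add: field_simps)

lemma L6: "0 < y1 \<Longrightarrow> y1 < y2 \<Longrightarrow> W y1 < W y2"
proof -
  assume y1: "0 < y1" and y12: "y1 < y2"
  show ?thesis unfolding W_def
  proof (rule DERIV_pos_imp_increasing_open[OF y12, where f = "\<lambda>z. (sin z + sinh z)^2 / (cosh z - cos z)"])
    fix x :: real assume x: "y1 < x" "x < y2"
    then have xp: "x > 0" using y1 by linarith
    have v: "cosh x - cos x \<noteq> 0" using L1[of x] xp by simp
    have "((\<lambda>z. (sin z + sinh z)^2 / (cosh z - cos z)) has_real_derivative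
       ((2 * (sin x + sinh x) * (cos x + cosh x)) * (cosh x - cos x) - (sin x + sinh x)^2 * (sinh x + sin x)) / (cosh x - cos x)^2) (at x)"
      using v by (auto intro!: derivative_eq_intros simp: power2_eq_square algebra_simps)
    moreover have "(2 * (sin x + sinh x) * (cos x + cosh x)) * (cosh x - cos x) - (sin x + sinh x)^2 * (sinh x + sin x)
        = (sin x + sinh x) * (sinh x - sin x)^2"
    proof -
      have "sin x ^2 + cos x ^2 = 1" by simp
      moreover have "cosh x ^2 = sinh x ^2 + 1" by (rule cosh_square_eq)
      ultimately show ?thesis by algebra
    qed
    moreover have "(sin x + sinh x) * (sinh x - sin x)^2 > 0" using L4[OF xp] L2[OF xp] by simp
    ultimately show "\<exists>d. ((\<lambda>z. (sin z + sinh z)^2 / (cosh z - cos z)) has_real_derivative d) (at x) \<and> d > 0"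
      using v by (intro exI[of _ "((2 * (sin x + sinh x) * (cos x + cosh x)) * (cosh x - cos x) - (sin x + sinh x)^2 * (sinh x + sin x)) / (cosh x - cos x)^2"] conjI) auto
  next
    have "\<forall>z\<in>{y1..y2}. cosh z - cos z \<noteq> 0"
    proof
      fix z assume "z \<in> {y1..y2}"
      then have "z \<noteq> 0" using y1 by auto
      then show "cosh z - cos z \<noteq> 0" using L1[of z] by simp
    qed
    then show "continuous_on {y1..y2} (\<lambda>z. (sin z + sinh z)^2 / (cosh z - cos z))"
      by (intro continuous_intros) auto
  qed
qed

lemma isol:
  fixes k :: "real \<Rightarrow> real"
  assumes "k x = 0" "(k has_real_derivative l) (at x)" "l \<noteq> 0"
  shows "\<exists>e>0. \<forall>y. y \<noteq> x \<and> \<bar>y - x\<bar> < e \<longrightarrow> k y \<noteq> 0"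
proof -
  have "((\<lambda>y. (k y - k x) / (y - x)) \<longlongrightarrow> l) (at x)"
    using assms(2) by (simp add: has_field_derivative_iff)
  then have "\<forall>\<^sub>F y in at x. (k y - k x) / (y - x) \<noteq> 0"
    using assms(3) by (rule tendsto_imp_eventually_ne)
  then obtain d where d: "d > 0" "\<forall>y. y \<noteq> x \<and> dist y x < d \<longrightarrow> (k y - k x) / (y - x) \<noteq> 0"
    unfolding eventually_at by blast
  show ?thesis
    using d assms(1) by (intro exI[of _ d]) (auto simp: dist_real_def)
qed

lemma mneg: "0 < t \<Longrightarrow> t < pi \<Longrightarrow> sinh t * cos t - cosh t * sin t < (0::real)"
proof -
  assume t: "0 < t" "t < pi"
  let ?m = "\<lambda>z::real. sinh z * cos z - cosh z * sin z"
  have "?m 0 > ?m t"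
  proof (rule DERIV_neg_imp_decreasing_open[OF t(1)])
    fix x :: real assume x: "0 < x" "x < t"
    have "(?m has_real_derivative (- 2 * sinh x * sin x)) (at x)"
      by (auto intro!: derivative_eq_intros simp: algebra_simps)
    moreover have "sin x > 0" using x t by (intro sin_gt_zero) auto
    moreover have "sinh x > 0" using x by simp
    ultimately show "\<exists>d. (?m has_real_derivative d) (at x) \<and> d < 0"
      by (intro exI[of _ "- 2 * sinh x * sin x"]) (auto intro: mult_pos_pos)
  next
    show "continuous_on {0..t} ?m" by (intro continuous_intros)
  qed
  then show ?thesis by simp
qed

lemma mnz: "0 < \<bar>t\<bar> \<Longrightarrow> \<bar>t\<bar> < pi \<Longrightarrow> sinh t * cos t - cosh t * sin t \<noteq> (0::real)"
proof -
  assume t: "0 < \<bar>t\<bar>" "\<bar>t\<bar> < pi"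
  show ?thesis
  proof (cases "t > 0")
    case True then show ?thesis using mneg[of t] t by simp
  next
    case False
    then have "0 < -t" "-t < pi" using t by auto
    from mneg[OF this] show ?thesis by simp
  qed
qed

theorem propositionC2:
  fixes a A B :: real and h :: "real \<Rightarrow> real"
  assumes "a \<noteq> 0" and "A \<noteq> 0 \<or> B \<noteq> 0"
    and "\<And>x. h x = A * cosh (a * x) * cos (a * x) - B * sinh (a * x) * sin (a * x)"
  shows "(\<forall>x. local_extremum_point h x \<longrightarrow>
            (\<exists>e>0. \<forall>y. local_extremum_point h y \<and> \<bar>y - x\<bar> < e \<longrightarrow> y = x))
       \<and> (\<forall>x1 x2. 0 \<le> x1 \<and> x1 < x2 \<and> local_extremum_point h x1 \<and> local_extremum_point h x2
            \<longrightarrow> \<bar>h x1\<bar> < \<bar>h x2\<bar>)"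
proof -
  define f where "f t = (A-B)*sinh t*cos t - (A+B)*cosh t*sin t" for t :: real
  define f' where "f' t = - (2*B*cosh t*cos t + 2*A*sinh t*sin t)" for t :: real
  define g where "g t = A * cosh t * cos t - B * sinh t * sin t" for t :: real
  have hg: "h x = g (a * x)" for x using assms(3) g_def by simp
  have ABpos: "A^2 + B^2 > 0" using assms(2) by (auto simp: sum_power2_gt_zero_iff)
  have fder: "(f has_real_derivative f' t) (at t)" for t
    unfolding f_def f'_def
    by (auto intro!: derivative_eq_intros simp: algebra_simps)
  have hder: "(h has_real_derivative a * f (a * x)) (at x)" for x
  proof -
    have "h = (\<lambda>x. g (a * x))" using hg by auto
    moreover have "((\<lambda>x. g (a * x)) has_real_derivative a * f (a * x)) (at x)"
      unfolding g_def f_def by (auto intro!: derivative_eq_intros simp: algebra_simps)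
    ultimately show ?thesis by simp
  qed
  have crit: "f (a * x) = 0" if "local_extremum_point h x" for x
  proof -
    have "a * f (a * x) = 0"
      using that unfolding local_extremum_point_def local_max_point_def local_min_point_def
    proof (elim disjE exE conjE)
      fix e :: real assume "e > 0" "\<forall>y. \<bar>y - x\<bar> < e \<longrightarrow> h y \<le> h x"
      then show ?thesis using DERIV_local_max[OF hder[of x], of e] by (simp add: abs_minus_commute)
    next
      fix e :: real assume "e > 0" "\<forall>y. \<bar>y - x\<bar> < e \<longrightarrow> h x \<le> h y"
      then show ?thesis using DERIV_local_min[OF hder[of x], of e] by (simp add: abs_minus_commute)
    qed
    then show ?thesis using assms(1) by simp
  qed
  have key: "g t ^ 2 = (A^2 + B^2) * W (2 * t) / 4" if "f t = 0" "t \<noteq> 0" for t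
  proof -
    have "4*(sin t^2+sinh t^2)*(A*cosh t*cos t - B*sinh t*sin t)^2 = 2*(A^2+B^2)*(sin t*cos t+sinh t*cosh t)^2"
      using alg1[of "sin t" "cos t" "cosh t" "sinh t" A B] that(1) cosh_square_eq[of t]
      unfolding f_def by simp
    moreover have Yp: "sin t^2+sinh t^2 > 0" using that(2) by (simp add: add_nonneg_pos)
    moreover have "W (2*t) = 2 * (sin t*cos t+sinh t*cosh t)^2 / (sin t^2+sinh t^2)"
    proof -
      have d: "cosh (2*t) - cos (2*t) = 2 * (sin t^2+sinh t^2)"
        unfolding cosh_double cos_double_sin using cosh_square_eq[of t] by simp
      have n: "sin (2*t) + sinh (2*t) = 2 * (sin t*cos t+sinh t*cosh t)"
        unfolding sin_double sinh_double by simp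
      have e: "(2*X)^2/(2*Y) = 2*X^2/Y" for X Y :: real by (simp add: power_mult_distrib)
      show ?thesis unfolding W_def d n e by (rule refl)
    qed
    ultimately show ?thesis unfolding g_def by (simp add: field_simps)
  qed
  have f'nz: "f' t \<noteq> 0" if "f t = 0" "t \<noteq> 0" for t
  proof
    assume f'0: "f' t = 0"
    have "(sin t^2+sinh t^2)*(2*B*cosh t*cos t + 2*A*sinh t*sin t)^2 = 2*(A^2+B^2)*(sin t*cos t-sinh t*cosh t)^2"
      using alg2[of "sin t" "cos t" "cosh t" "sinh t" A B] that(1) cosh_square_eq[of t]
      unfolding f_def by simp
    moreover have "2*B*cosh t*cos t + 2*A*sinh t*sin t = 0" using f'0 unfolding f'_def by (simp add: algebra_simps)
    ultimately have "2*(A^2+B^2)*(sin t*cos t-sinh t*cosh t)^2 = 0" by simp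
    then have "(sin t*cos t-sinh t*cosh t) = 0" using ABpos by simp
    then have "sinh (2*t) - sin (2*t) = 0" unfolding sin_double sinh_double by simp
    moreover have "sinh (2*t) - sin (2*t) \<noteq> 0"
    proof (cases "t > 0")
      case True then show ?thesis using L2[of "2*t"] by simp
    next
      case False then have "-2*t > 0" using that(2) by simp
      then show ?thesis using L2[of "-2*t"] by simp
    qed
    ultimately show False by simp
  qed
  show ?thesis
  proof (intro conjI allI impI)
    fix x assume ex: "local_extremum_point h x"
    have fx: "f (a * x) = 0" by (rule crit[OF ex])
    have "\<exists>e>0. \<forall>y. y \<noteq> x \<and> \<bar>y - x\<bar> < e \<longrightarrow> f (a * y) \<noteq> 0"
    proof (cases "a * x = 0 \<and> B = 0")
      case False
      have "f' (a * x) \<noteq> 0"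
      proof (cases "a * x = 0")
        case True then have "B \<noteq> 0" using False by simp
        have "f' (a * x) = f' 0" by (simp only: True)
        also have "\<dots> = - (2 * B)" by (simp add: f'_def)
        finally show ?thesis using \<open>B \<noteq> 0\<close> by simp
      next
        case False then show ?thesis using f'nz fx by simp
      qed
      moreover have "((\<lambda>y. f (a * y)) has_real_derivative f' (a * x) * a) (at x)"
        by (rule DERIV_chain2[OF fder]) (auto intro!: derivative_eq_intros)
      ultimately show ?thesis using isol[of "\<lambda>y. f (a * y)" x "f' (a * x) * a"] fx assms(1) by simp
    next
      case True
      then have x0: "x = 0" and B0: "B = 0" using assms(1) by auto
      then have A0: "A \<noteq> 0" using assms(2) by simp
      show ?thesis
      proof (intro exI[of _ "pi / \<bar>a\<bar>"] conjI allI impI)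
        show "pi / \<bar>a\<bar> > 0" using assms(1) by simp
        fix y assume y: "y \<noteq> x \<and> \<bar>y - x\<bar> < pi / \<bar>a\<bar>"
        then have "0 < \<bar>a * y\<bar>" "\<bar>a * y\<bar> < pi" using x0 assms(1)
          by (auto simp: abs_mult field_simps)
        from mnz[OF this] show "f (a * y) \<noteq> 0" unfolding f_def B0 using A0
          by (simp add: algebra_simps)
      qed
    qed
    then obtain e where e: "e > 0" "\<forall>y. y \<noteq> x \<and> \<bar>y - x\<bar> < e \<longrightarrow> f (a * y) \<noteq> 0" by blast
    show "\<exists>e>0. \<forall>y. local_extremum_point h y \<and> \<bar>y - x\<bar> < e \<longrightarrow> y = x"
      using e crit by blast
  next
    fix x1 x2 assume H: "0 \<le> x1 \<and> x1 < x2 \<and> local_extremum_point h x1 \<and> local_extremum_point h x2"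
    have f1: "f (a * x1) = 0" and f2: "f (a * x2) = 0" using H crit by auto
    have x2p: "x2 > 0" using H by linarith
    have Wabs: "W (2 * (a * x)) = W (2 * \<bar>a\<bar> * x)" if "x \<ge> 0" for x
      using that W_even[of "2 * a * x"] by (cases "a \<ge> 0") (auto simp: mult.assoc)
    have h2: "h x2 ^ 2 = (A^2 + B^2) * W (2 * \<bar>a\<bar> * x2) / 4"
      using key[OF f2] assms(1) x2p hg Wabs[of x2] by simp
    have pos2: "2 * \<bar>a\<bar> * x2 > 0" using assms(1) x2p by simp
    have sq: "h x1 ^ 2 < h x2 ^ 2"
    proof (cases "x1 = 0")
      case True
      have "h x1 = A" using True hg g_def by simp
      then have "h x1 ^ 2 \<le> A^2 + B^2" by simp
      also have "\<dots> < (A^2 + B^2) * W (2 * \<bar>a\<bar> * x2) / 4"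
        using mult_strict_left_mono[OF W_gt4[OF pos2] ABpos] by simp
      finally show ?thesis using h2 by simp
    next
      case False
      then have x1p: "x1 > 0" using H by linarith
      have h1: "h x1 ^ 2 = (A^2 + B^2) * W (2 * \<bar>a\<bar> * x1) / 4"
        using key[OF f1] assms(1) x1p hg Wabs[of x1] by simp
      have "W (2 * \<bar>a\<bar> * x1) < W (2 * \<bar>a\<bar> * x2)"
        using L6[of "2 * \<bar>a\<bar> * x1" "2 * \<bar>a\<bar> * x2"] assms(1) x1p H by simp
      from mult_strict_left_mono[OF this ABpos] show ?thesis unfolding h1 h2 by simp
    qed
    show "\<bar>h x1\<bar> < \<bar>h x2\<bar>" using sq by (simp add: power2_less_imp_less abs_le_square_iff)
  qed
qed

end
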